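(* Let $a$ and $b$ be irrational numbers with $1<a<b$ and $\{a\}=\{b\}=:\theta$. Let $a_n=[an]$, $b_n=[bn]$, and for positive integers $n$ define $$h(n)=\frac{a_{n+1}}{a_n}-\frac{b_{n+1}}{b_n},\qquad f(n)=\begin{cases}1,& h(n)>0,\\ 0,&\text{otherwise},\end{cases}\qquad g(n)=[\theta(n+1)]-[\theta n].$$ Then $f(n)=g(n)$ for every positive integer $n$; that is, the infinite words $f(1)f(2)f(3)\cdots$ and $g(1)g(2)g(3)\cdots$ coincide.
   Context: $[x]$ is the greatest integer not exceeding $x$ and $\{x\}=x-[x]$. The sequence $g$ is the characteristic (Sturmian) sequence of slope $\theta$; equivalently $g(n)=1$ exactly when $n=[j/\theta]$ for some positive integer $j$. *)

theory Defs
  imports Complex_Main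
begin

definition frac_part :: "real \<Rightarrow> real" where
  "frac_part x = x - of_int \<lfloor>x\<rfloor>"

definition beatty :: "real \<Rightarrow> nat \<Rightarrow> int" where
  "beatty a n = \<lfloor>a * real n\<rfloor>"

definition h_seq :: "real \<Rightarrow> real \<Rightarrow> nat \<Rightarrow> real" where
  "h_seq a b n = of_int (beatty a (n+1)) / of_int (beatty a n)
                 - of_int (beatty b (n+1)) / of_int (beatty b n)"

definition f_seq :: "real \<Rightarrow> real \<Rightarrow> nat \<Rightarrow> int" where
  "f_seq a b n = (if h_seq a b n > 0 then 1 else 0)"

definition g_seq :: "real \<Rightarrow> nat \<Rightarrow> int" where
  "g_seq \<theta> n = \<lfloor>\<theta> * real (n+1)\<rfloor> - \<lfloor>\<theta> * real n\<rfloor>"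

end

theory Submission
  imports Defs
begin

theorem theorem5:
  fixes a b :: real
  assumes "a \<notin> \<rat>" and "b \<notin> \<rat>"
    and "1 < a" and "a < b"
    and "frac_part a = frac_part b"
  shows "\<forall>n::nat. n \<ge> 1 \<longrightarrow> f_seq a b n = g_seq (frac_part a) n"
proof (intro allI impI)
  fix n :: nat assume n1: "n \<ge> 1"
  define t where "t = frac_part a"
  define m where "m = \<lfloor>a\<rfloor>"
  define k where "k = \<lfloor>b\<rfloor> - \<lfloor>a\<rfloor>"
  have t0: "0 \<le> t" and t1: "t < 1" unfolding t_def frac_part_def by linarith+
  have a_eq: "a = of_int m + t" unfolding t_def m_def frac_part_def by simp
  have b_eq: "b = a + of_int k" using assms(5) unfolding k_def frac_part_def by simp
  have kpos: "k > 0" using assms(4) b_eq by simp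
  have bA: "beatty a j = m * int j + \<lfloor>t * real j\<rfloor>" for j
  proof -
    have "a * real j = of_int (m * int j) + t * real j" using a_eq by (simp add: algebra_simps)
    thus ?thesis unfolding beatty_def by (metis floor_add_int add.commute)
  qed
  have bB: "beatty b j = beatty a j + k * int j" for j
  proof -
    have "b * real j = a * real j + of_int (k * int j)" using b_eq by (simp add: algebra_simps)
    thus ?thesis unfolding beatty_def by (metis floor_add_int)
  qed
  define p where "p = \<lfloor>t * real n\<rfloor>"
  define q where "q = \<lfloor>t * real (n+1)\<rfloor>"
  have qp: "q = p \<or> q = p + 1"
  proof -
    have "t * real (n+1) = t * real n + t" by (simp add: algebra_simps)
    hence "p \<le> q" "q \<le> p + 1" unfolding p_def q_def using t0 t1 by linarith+
    thus ?thesis by linarith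
  qed
  have pn: "p < int n"
  proof -
    have "t * real n < real n" using t1 n1 by simp
    thus ?thesis unfolding p_def by linarith
  qed
  have p0: "p \<ge> 0" unfolding p_def using t0 by simp
  have m1: "m \<ge> 1" using assms(3) unfolding m_def by linarith
  define A where "A = beatty a n"
  define A' where "A' = beatty a (n+1)"
  define B where "B = beatty b n"
  define B' where "B' = beatty b (n+1)"
  have Aeq: "A = m * int n + p" unfolding A_def p_def by (rule bA)
  have A'eq: "A' = m * int (n+1) + q" unfolding A'_def q_def by (rule bA)
  have Beq: "B = A + k * int n" unfolding B_def A_def by (rule bB)
  have B'eq: "B' = A' + k * int (n+1)" unfolding B'_def A'_def by (rule bB)
  have mn: "m * int n \<ge> 1 * 1" using m1 n1 by (intro mult_mono) auto
  have kn: "k * int n \<ge> 0" using kpos by simp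
  have Apos: "A > 0" using Aeq mn p0 by linarith
  have Bpos: "B > 0" using Beq Apos kn by linarith
  have key: "A' * B - B' * A = k * (int n * q - (int n + 1) * p)"
    unfolding Aeq A'eq Beq B'eq by (simp add: algebra_simps)
  define D where "D = A' * B - B' * A"
  have h: "h_seq a b n = real_of_int D / real_of_int (A * B)"
    unfolding h_seq_def A_def[symmetric] A'_def[symmetric] B_def[symmetric] B'_def[symmetric] D_def
    using Apos Bpos by (simp add: diff_frac_eq)
  have AB: "real_of_int (A * B) > 0" using Apos Bpos by simp
  have g: "g_seq t n = q - p" unfolding g_seq_def p_def q_def by simp
  show "f_seq a b n = g_seq (frac_part a) n"
  proof (cases "q = p")
    case True
    have "D \<le> 0" unfolding D_def key True using kpos p0
      by (simp add: algebra_simps mult_nonneg_nonneg)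
    hence "real_of_int D \<le> 0" by simp
    hence "h_seq a b n \<le> 0" unfolding h using AB
      by (rule divide_nonpos_pos)
    thus ?thesis unfolding f_seq_def t_def[symmetric] g True by simp
  next
    case False
    hence qq: "q = p + 1" using qp by simp
    have "D > 0" unfolding D_def key qq using kpos pn
      by (simp add: algebra_simps)
    hence "real_of_int D > 0" by simp
    hence "h_seq a b n > 0" unfolding h using AB by (rule divide_pos_pos)
    thus ?thesis unfolding f_seq_def t_def[symmetric] g qq by simp
  qed
qed

end
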